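(* Let $P[1..m]$ and $S[1..m]$ be strings of the same length $m$ over a totally ordered alphabet. Then $CT(P)=CT(S)$ if and only if $S[\mathcal{GP}_P(i)]\preceq S[i]$ for all $1\le i\le m$.
   Context: A string $S$ is a finite sequence $S[1],S[2],\dots$ over an alphabet $\Sigma$ with a total order $<$; $S[i..j]$ denotes the substring $S[i]\cdots S[j]$ (empty if $i>j$). For positions $i,j$ of $S$, write $S[i]\prec S[j]$ iff either $S[i]<S[j]$, or $S[i]$ and $S[j]$ have the same value and $i<j$; write $S[i]\preceq S[j]$ iff $S[i]\prec S[j]$ or $i=j$. Minimum elements are taken with respect to $\prec$ (leftmost among equal minimal values). Cartesian tree $CT(S)$ of $S[1..n]$: if $S$ is empty, $CT(S)$ is the empty tree; otherwise, if $S[i]$ is the minimum of $S$, $CT(S)$ is the binary tree with root $S[i]$, left subtree $CT(S[1..i-1])$ and right subtree $CT(S[i+1..n])$. Two Cartesian trees are equal when they are equal as (unlabeled, ordered) binary tree shapes. Prefix-parent representation: $\mathcal{PP}_S(i)=\max\{j: 1\le j<i,\ S[j]\prec S[i]\}$ if such $j$ exists, and $\mathcal{PP}_S(i)=i$ otherwise. Prefix-child representation: $\mathcal{PC}_S(1)=1$, and for $i\ge 2$: if $\mathcal{PP}_S(i)=i$, then $\mathcal{PC}_S(i)$ is the index $j\in[1,i-1]$ such that $S[j]$ is the minimum of $S[1..i-1]$; if $\mathcal{PP}_S(i)=i-1$, then $\mathcal{PC}_S(i)=i$; if $\mathcal{PP}_S(i)<i-1$, then $\mathcal{PC}_S(i)$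 is the index $j$ with $\mathcal{PP}_S(i)<j<i$ such that $S[j]$ is the minimum of $S[\mathcal{PP}_S(i)+1..i-1]$. Global-parent representation: $\mathcal{GP}_S(i)=j$ if there is an index $j>i$ with $\mathcal{PC}_S(j)=i$ (there is at most one such $j$), and $\mathcal{GP}_S(i)=\mathcal{PP}_S(i)$ otherwise. *)

theory Defs
  imports Main
begin

text \<open>Strings are lists over a linearly ordered alphabet; positions are 1-based:
  position i of S (1 \<le> i \<le> length S) is  S ! (i - 1).\<close>

definition at :: "'a list \<Rightarrow> nat \<Rightarrow> 'a" where
  "at S i = S ! (i - 1)"

definition prec :: "'a::linorder list \<Rightarrow> nat \<Rightarrow> nat \<Rightarrow> bool" where
  "prec S i j \<longleftrightarrow> at S i < at S j \<or> (at S i = at S j \<and> i < j)"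

definition preceq :: "'a::linorder list \<Rightarrow> nat \<Rightarrow> nat \<Rightarrow> bool" where
  "preceq S i j \<longleftrightarrow> prec S i j \<or> i = j"

datatype btree = Leaf | Node btree btree

text \<open>0-based index of the leftmost minimum of a nonempty list.\<close>
definition minidx :: "'a::linorder list \<Rightarrow> nat" where
  "minidx S = (LEAST k. k < length S \<and> (\<forall>j < length S. S ! k \<le> S ! j))"

lemma minidx_less: "S \<noteq> [] \<Longrightarrow> minidx (S::'a::linorder list) < length S"
proof -
  assume "S \<noteq> []"
  then have "Min (set S) \<in> set S" by simp
  then obtain k where k: "k < length S" "S ! k = Min (set S)" by (metis in_set_conv_nth)
  have "\<forall>j < length S. S ! k \<le> S ! j" using k by simp
  with k(1) have "minidx S < length S \<and> (\<forall>j < length S. S ! minidx S \<le> S ! j)"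
    unfolding minidx_def by (intro LeastI[where P="\<lambda>k. k < length S \<and> (\<forall>j < length S. S ! k \<le> S ! j)"]) simp
  then show ?thesis by simp
qed

function CT :: "'a::linorder list \<Rightarrow> btree" where
  "CT S = (if S = [] then Leaf
           else Node (CT (take (minidx S) S)) (CT (drop (Suc (minidx S)) S)))"
  by pat_completeness auto
termination
  by (relation "measure length") (auto dest: minidx_less)

declare CT.simps[simp del]

text \<open>Leftmost minimum position (1-based) of S[a..b] (assumed nonempty).\<close>
definition argmin_range :: "'a::linorder list \<Rightarrow> nat \<Rightarrow> nat \<Rightarrow> nat" where
  "argmin_range S a b = (LEAST j. a \<le> j \<and> j \<le> b \<and> (\<forall>k. a \<le> k \<and> k \<le> b \<longrightarrow> at S j \<le> at S k))"

definition PP :: "'a::linorder list \<Rightarrow> nat \<Rightarrow> nat" where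
  "PP S i = (if \<exists>j. 1 \<le> j \<and> j < i \<and> prec S j i
             then GREATEST j. 1 \<le> j \<and> j < i \<and> prec S j i else i)"

definition PC :: "'a::linorder list \<Rightarrow> nat \<Rightarrow> nat" where
  "PC S i = (if i = 1 then 1
             else if PP S i = i then argmin_range S 1 (i - 1)
             else if PP S i = i - 1 then i
             else argmin_range S (PP S i + 1) (i - 1))"

definition GP :: "'a::linorder list \<Rightarrow> nat \<Rightarrow> nat" where
  "GP S i = (if \<exists>j. i < j \<and> j \<le> length S \<and> PC S j = i
             then THE j. i < j \<and> j \<le> length S \<and> PC S j = i else PP S i)"

end

theory Submission
  imports Defs
begin


lemma prec_trans: "prec X i j \<Longrightarrow> prec X j k \<Longrightarrow> prec X i k"
  unfolding prec_def by auto

lemma prec_irrefl: "\<not> prec X i i"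
  unfolding prec_def by auto

lemma prec_total: "i \<noteq> j \<Longrightarrow> prec X i j \<or> prec X j i"
  unfolding prec_def by auto

lemma prec_asym: "prec X i j \<Longrightarrow> \<not> prec X j i"
  unfolding prec_def by auto

lemma notprec_lt: "k < i \<Longrightarrow> \<not> prec X k i \<Longrightarrow> at X i < at X k"
  unfolding prec_def by auto

lemma prec_gt: "i < k \<Longrightarrow> prec X k i \<Longrightarrow> at X k < at X i"
  unfolding prec_def by auto

definition IM :: "'a::linorder list \<Rightarrow> nat \<Rightarrow> nat \<Rightarrow> nat \<Rightarrow> bool" where
  "IM X a b c \<longleftrightarrow> a \<le> c \<and> c \<le> b \<and> (\<forall>k. a \<le> k \<and> k \<le> b \<and> k \<noteq> c \<longrightarrow> prec X c k)"

lemma IM_unique: "IM X a b c \<Longrightarrow> IM X a b c' \<Longrightarrow> c = c'"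
  unfolding IM_def using prec_asym by blast

lemma IM_sub: "IM X a b c \<Longrightarrow> a \<le> a' \<Longrightarrow> a' \<le> c \<Longrightarrow> c \<le> b' \<Longrightarrow> b' \<le> b \<Longrightarrow> IM X a' b' c"
  unfolding IM_def by auto

lemma PP_lt:
  assumes "PP X i \<noteq> i"
  shows "1 \<le> PP X i \<and> PP X i < i \<and> prec X (PP X i) i \<and> (\<forall>k. PP X i < k \<and> k < i \<longrightarrow> \<not> prec X k i)"
proof -
  let ?Q = "\<lambda>j. 1 \<le> j \<and> j < i \<and> prec X j i"
  have ex: "\<exists>j. ?Q j" using assms unfolding PP_def by (auto split: if_splits)
  then have eq: "PP X i = (GREATEST j. ?Q j)" unfolding PP_def by simp
  have b: "\<forall>y. ?Q y \<longrightarrow> y \<le> i" by auto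
  have q: "?Q (GREATEST j. ?Q j)" using ex b by (metis (no_types, lifting) GreatestI_nat)
  have m: "\<forall>k. ?Q k \<longrightarrow> k \<le> (GREATEST j. ?Q j)" using ex b by (metis (no_types, lifting) Greatest_le_nat)
  show ?thesis using q m eq by (metis (no_types, lifting) le_trans less_imp_le not_le order_less_le_trans)
qed

lemma PP_eq:
  assumes "PP X i = i" "1 \<le> k" "k < i"
  shows "\<not> prec X k i"
proof
  assume h: "prec X k i"
  let ?Q = "\<lambda>j. 1 \<le> j \<and> j < i \<and> prec X j i"
  have ex: "\<exists>j. ?Q j" using h assms by auto
  then have eq: "PP X i = (GREATEST j. ?Q j)" unfolding PP_def by simp
  have b: "\<forall>y. ?Q y \<longrightarrow> y \<le> i" by auto
  have q: "?Q (GREATEST j. ?Q j)" using ex b by (metis (no_types, lifting) GreatestI_nat)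
  then show False using eq assms by simp
qed

lemma PP_I_none:
  assumes "\<forall>k. 1 \<le> k \<and> k < i \<longrightarrow> \<not> prec X k i"
  shows "PP X i = i"
  using assms unfolding PP_def by auto

lemma PP_I:
  assumes "1 \<le> p" "p < i" "prec X p i" "\<forall>k. p < k \<and> k < i \<longrightarrow> \<not> prec X k i"
  shows "PP X i = p"
proof -
  let ?Q = "\<lambda>j. 1 \<le> j \<and> j < i \<and> prec X j i"
  have ex: "\<exists>j. ?Q j" using assms by auto
  then have eq: "PP X i = (GREATEST j. ?Q j)" unfolding PP_def by simp
  have "(GREATEST j. ?Q j) = p"
    apply (rule Greatest_equality)
    using assms by (auto simp: not_less[symmetric])
  then show ?thesis using eq by simp
qed

lemma am_props:
  assumes "a \<le> b"
  shows "a \<le> argmin_range X a b \<and> argmin_range X a b \<le> b \<and>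
    (\<forall>k. a \<le> k \<and> k \<le> b \<longrightarrow> at X (argmin_range X a b) \<le> at X k) \<and>
    (\<forall>k. a \<le> k \<and> k < argmin_range X a b \<longrightarrow> at X (argmin_range X a b) < at X k)"
proof -
  let ?Q = "\<lambda>j. a \<le> j \<and> j \<le> b \<and> (\<forall>k. a \<le> k \<and> k \<le> b \<longrightarrow> at X j \<le> at X k)"
  have fin: "finite (at X ` {a..b})" by simp
  have ne: "at X ` {a..b} \<noteq> {}" using assms by simp
  obtain j where j: "j \<in> {a..b}" "at X j = Min (at X ` {a..b})"
    using Min_in[OF fin ne] by auto
  have "?Q j" using j fin by auto
  then have Q: "?Q (LEAST j. ?Q j)" by (rule LeastI)
  have L: "\<forall>k. k < (LEAST j. ?Q j) \<longrightarrow> \<not> ?Q k" using not_less_Least by blast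
  show ?thesis unfolding argmin_range_def
  proof (intro conjI allI impI)
    fix k assume k: "a \<le> k \<and> k < (LEAST j. ?Q j)"
    then have "\<not> ?Q k" using L by blast
    moreover have "k \<le> b" using k Q by auto
    ultimately obtain k' where "a \<le> k'" "k' \<le> b" "at X k' < at X k" using k by force
    then show "at X (LEAST j. ?Q j) < at X k" using Q by force
  qed (use Q in auto)
qed

lemma am_I:
  assumes "a \<le> c" "c \<le> b" "\<forall>k. a \<le> k \<and> k \<le> b \<longrightarrow> at X c \<le> at X k"
    "\<forall>k. a \<le> k \<and> k < c \<longrightarrow> at X c < at X k"
  shows "argmin_range X a b = c"
  unfolding argmin_range_def
  apply (rule Least_equality)
  using assms apply auto[1]
  using assms by (metis leD not_le_imp_less)



lemma PCq:
  assumes "PC X j = q" "q < j"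
  shows "\<exists>lo. lo < q \<and> (lo = 0 \<or> (1 \<le> lo \<and> prec X lo j)) \<and>
    (\<forall>k. lo < k \<and> k < j \<longrightarrow> at X j < at X k) \<and>
    (\<forall>k. lo < k \<and> k < j \<longrightarrow> at X q \<le> at X k) \<and>
    (\<forall>k. lo < k \<and> k < q \<longrightarrow> at X q < at X k)"
proof -
  have j1: "j \<noteq> 1" using assms unfolding PC_def by auto
  show ?thesis
  proof (cases "PP X j = j")
    case True
    then have qa: "q = argmin_range X 1 (j - 1)" using assms j1 unfolding PC_def by auto
    have "1 \<le> j - 1" using j1 assms by auto
    note A = am_props[OF this, of X, folded qa]
    have B: "\<forall>k. 0 < k \<and> k < j \<longrightarrow> at X j < at X k"
      using PP_eq[OF True] notprec_lt by (metis One_nat_def Suc_leI)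
    show ?thesis
      apply (rule exI[of _ 0])
      using A B by (auto simp: Suc_le_eq)
  next
    case False
    note P = PP_lt[OF False]
    have ne: "PP X j \<noteq> j - 1" using assms j1 False unfolding PC_def by auto
    then have qa: "q = argmin_range X (PP X j + 1) (j - 1)" using assms j1 False unfolding PC_def by auto
    have "PP X j + 1 \<le> j - 1" using ne P by auto
    note A = am_props[OF this, of X, folded qa]
    have B: "\<forall>k. PP X j < k \<and> k < j \<longrightarrow> at X j < at X k"
      using P notprec_lt by blast
    show ?thesis
      apply (rule exI[of _ "PP X j"])
      using A B P by (auto simp: Suc_le_eq)
  qed
qed

lemma PCq_IM:
  assumes "PC X j = q" "q < j"
  shows "IM X q j j"
proof -
  obtain lo where "lo < q" "\<forall>k. lo < k \<and> k < j \<longrightarrow> at X j < at X k"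
    using PCq[OF assms] by blast
  then show ?thesis using assms(2) unfolding IM_def prec_def by auto
qed

lemma PC_I_none:
  assumes "2 \<le> j" "PP X j = j" "1 \<le> q" "q < j" "\<forall>k. 1 \<le> k \<and> k < j \<longrightarrow> at X q \<le> at X k"
    "\<forall>k. 1 \<le> k \<and> k < q \<longrightarrow> at X q < at X k"
  shows "PC X j = q"
proof -
  have "argmin_range X 1 (j - 1) = q"
    by (rule am_I) (use assms in auto)
  then show ?thesis using assms unfolding PC_def by auto
qed

lemma PC_I:
  assumes "PP X j = p" "1 \<le> p" "p < q" "q < j" "\<forall>k. p < k \<and> k < j \<longrightarrow> at X q \<le> at X k"
    "\<forall>k. p < k \<and> k < q \<longrightarrow> at X q < at X k"
  shows "PC X j = q"
proof -
  have "argmin_range X (p + 1) (j - 1) = q"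
    by (rule am_I) (use assms in auto)
  then show ?thesis using assms unfolding PC_def by auto
qed

lemma PC_uniq:
  assumes "q < j1" "j1 < j2" "PC X j1 = q" "PC X j2 = q"
  shows False
proof -
  obtain lo where lo: "lo < q" "\<forall>k. lo < k \<and> k < j2 \<longrightarrow> at X q \<le> at X k"
    using PCq[OF assms(4)] assms by (meson order.strict_trans)
  obtain lo1 where lo1: "lo1 < q" "\<forall>k. lo1 < k \<and> k < j1 \<longrightarrow> at X j1 < at X k"
    using PCq[OF assms(3) assms(1)] by blast
  have "at X q \<le> at X j1" using lo assms by auto
  moreover have "at X j1 < at X q" using lo1 assms by auto
  ultimately show False by simp
qed

lemma GP_A:
  assumes "q < j" "j \<le> length X" "PC X j = q"
  shows "GP X q = j"
proof -
  have "(THE j. q < j \<and> j \<le> length X \<and> PC X j = q) = j"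
    apply (rule the_equality)
    using assms apply simp
    using assms PC_uniq by (metis linorder_neqE_nat)
  then show ?thesis using assms unfolding GP_def by auto
qed

lemma GP_B:
  assumes "\<not> (\<exists>j. q < j \<and> j \<le> length X \<and> PC X j = q)"
  shows "GP X q = PP X q"
  using assms unfolding GP_def by auto



lemma GP_IM:
  assumes "1 \<le> i" "i \<le> length X" "GP X i \<noteq> i"
  shows "1 \<le> GP X i \<and> GP X i \<le> length X \<and>
    (i < GP X i \<and> IM X i (GP X i) (GP X i) \<or> GP X i < i \<and> IM X (GP X i) i (GP X i))"
proof (cases "\<exists>j. i < j \<and> j \<le> length X \<and> PC X j = i")
  case True
  then obtain j where j: "i < j" "j \<le> length X" "PC X j = i" by blast
  have "GP X i = j" using GP_A[OF j] .
  then show ?thesis using j PCq_IM[OF j(3) j(1)] assms by auto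
next
  case False
  then have g: "GP X i = PP X i" by (rule GP_B)
  then have ne: "PP X i \<noteq> i" using assms by simp
  note P = PP_lt[OF ne]
  have "IM X (PP X i) i (PP X i)"
    unfolding IM_def
  proof (intro conjI allI impI)
    fix k assume k: "PP X i \<le> k \<and> k \<le> i \<and> k \<noteq> PP X i"
    show "prec X (PP X i) k"
    proof (cases "k = i")
      case True then show ?thesis using P by simp
    next
      case False
      then have "\<not> prec X k i" using P k by auto
      then have "prec X i k" using prec_total False by blast
      then show ?thesis using P prec_trans by blast
    qed
  qed (use P in auto)
  then show ?thesis using g P assms by auto
qed

lemma first_below:
  fixes X :: "'a::linorder list"
  assumes "q < c" "at X c < at X q"
  obtains j where "q < j" "j \<le> c" "at X j < at X q" "\<forall>k. q < k \<and> k < j \<longrightarrow> at X q \<le> at X k"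
proof -
  let ?Q = "\<lambda>j. q < j \<and> j \<le> c \<and> at X j < at X q"
  have "?Q c" using assms by auto
  then have Q: "?Q (LEAST j. ?Q j)" by (rule LeastI)
  have "\<forall>k. q < k \<and> k < (LEAST j. ?Q j) \<longrightarrow> at X q \<le> at X k"
  proof (intro allI impI)
    fix k assume k: "q < k \<and> k < (LEAST j. ?Q j)"
    then have "\<not> ?Q k" using not_less_Least by blast
    moreover have "k \<le> c" using k Q by auto
    ultimately have "\<not> at X k < at X q" using k by blast
    then show "at X q \<le> at X k" by (simp add: not_less)
  qed
  then show ?thesis using that Q by blast
qed

lemma seg_facts:
  fixes X :: "'a::linorder list"
  assumes "lo < q" "q < j" "\<forall>k. lo < k \<and> k < q \<longrightarrow> at X q < at X k"
    "\<forall>k. q < k \<and> k < j \<longrightarrow> at X q \<le> at X k" "at X j < at X q"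
  shows "\<forall>k. lo < k \<and> k < j \<longrightarrow> \<not> prec X k j" "\<forall>k. lo < k \<and> k < j \<longrightarrow> at X q \<le> at X k"
proof -
  have A: "at X j < at X k" if "lo < k" "k < j" for k
  proof -
    consider "k < q" | "k = q" | "q < k" by linarith
    then show ?thesis
    proof cases
      case 1 then show ?thesis using assms that by (meson order.strict_trans)
    next
      case 2 then show ?thesis using assms by simp
    next
      case 3 then show ?thesis using assms that by (meson order.strict_trans2)
    qed
  qed
  show "\<forall>k. lo < k \<and> k < j \<longrightarrow> \<not> prec X k j" using A unfolding prec_def by fastforce
  show "\<forall>k. lo < k \<and> k < j \<longrightarrow> at X q \<le> at X k"
  proof (intro allI impI)
    fix k assume k: "lo < k \<and> k < j"
    consider "k < q" | "k = q" | "q < k" by linarith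
    then show "at X q \<le> at X k"
    proof cases
      case 1 then show ?thesis using assms k by (meson less_imp_le)
    qed (use assms k in auto)
  qed
qed

lemma GP_step:
  assumes "1 \<le> q" "q \<le> length X" "1 \<le> c" "c \<le> length X" "q \<noteq> c"
    "IM X (min c q) (max c q) c"
  shows "1 \<le> GP X q \<and> GP X q \<le> length X \<and> GP X q \<noteq> q \<and> prec X (GP X q) q \<and>
    (GP X q = c \<or> IM X (min c (GP X q)) (max c (GP X q)) c)"
proof (cases "\<exists>j. q < j \<and> j \<le> length X \<and> PC X j = q")
  case True
  then obtain j where j: "q < j" "j \<le> length X" "PC X j = q" by blast
  have g: "GP X q = j" using GP_A[OF j] .
  have IMj: "IM X q j j" using PCq_IM[OF j(3) j(1)] .
  then have pjq: "prec X j q" unfolding IM_def using j by auto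
  obtain lo where lo: "lo < q" "lo = 0 \<or> (1 \<le> lo \<and> prec X lo j)"
    "\<forall>k. lo < k \<and> k < j \<longrightarrow> at X j < at X k"
    "\<forall>k. lo < k \<and> k < j \<longrightarrow> at X q \<le> at X k"
    "\<forall>k. lo < k \<and> k < q \<longrightarrow> at X q < at X k"
    using PCq[OF j(3) j(1)] by blast
  have "j = c \<or> IM X (min c j) (max c j) c"
  proof (cases "c < q")
    case True
    then have IMc: "IM X c q c" using assms by (simp add: min_def max_def)
    have pcq: "prec X c q" using IMc assms unfolding IM_def by auto
    have pcj: "prec X c j"
    proof (cases "lo < c")
      case True
      then have "at X q < at X c" using lo \<open>c < q\<close> by auto
      then show ?thesis using pcq unfolding prec_def by auto
    next
      case False
      then have l1: "1 \<le> lo" "prec X lo j" using lo assms by auto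
      have "lo = c \<or> prec X c lo" using IMc False lo(1) unfolding IM_def by (auto simp: not_less)
      then show ?thesis using l1 prec_trans by blast
    qed
    have "IM X c j c" unfolding IM_def
    proof (intro conjI allI impI)
      fix k assume k: "c \<le> k \<and> k \<le> j \<and> k \<noteq> c"
      show "prec X c k"
      proof (cases "k \<le> q")
        case True then show ?thesis using IMc k unfolding IM_def by auto
      next
        case False
        then have "k = j \<or> prec X j k" using IMj k unfolding IM_def by (metis less_imp_le not_le)
        then show ?thesis using pcj prec_trans by blast
      qed
    qed (use True j in auto)
    then show ?thesis using True j by (simp add: min_def max_def)
  next
    case False
    then have cq: "q < c" using assms by auto
    then have IMc: "IM X q c c" using assms by (simp add: min_def max_def)
    have pcq: "prec X c q" using IMc assms unfolding IM_def by auto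
    have "j \<le> c"
    proof (rule ccontr)
      assume "\<not> j \<le> c"
      then have "at X q \<le> at X c" using lo cq by auto
      then show False using pcq cq unfolding prec_def by auto
    qed
    then show ?thesis using IM_sub[OF IMc] j by (cases "j = c") (auto simp: min_def max_def)
  qed
  then show ?thesis using g j pjq assms by auto
next
  case noPC: False
  then have g: "GP X q = PP X q" by (rule GP_B)
  show ?thesis
  proof (cases "PP X q = q")
    case True
    show ?thesis
    proof (cases "c < q")
      case True
      then have "prec X c q" using assms unfolding IM_def by (auto simp: min_def max_def)
      then show ?thesis using PP_eq[OF \<open>PP X q = q\<close>, of c] True assms by auto
    next
      case False
      then have cq: "q < c" using assms by auto
      then have "prec X c q" using assms unfolding IM_def by (auto simp: min_def max_def)
      then have "at X c < at X q" using cq unfolding prec_def by auto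
      then obtain j where j: "q < j" "j \<le> c" "at X j < at X q"
        "\<forall>k. q < k \<and> k < j \<longrightarrow> at X q \<le> at X k"
        using first_below cq by blast
      have lt: "\<forall>k. 1 \<le> k \<and> k < q \<longrightarrow> at X q < at X k"
        using PP_eq[OF True] notprec_lt by blast
      have "PP X j = j"
        apply (rule PP_I_none)
        using seg_facts(1)[of 0 q j X] lt j assms by auto
      have "PC X j = q"
        apply (rule PC_I_none[OF _ \<open>PP X j = j\<close>])
        using seg_facts(2)[of 0 q j X] j lt assms by auto
      then show ?thesis using noPC j assms by auto
    qed
  next
    case ne: False
    note P = PP_lt[OF ne]
    let ?p = "PP X q"
    have gt: "\<forall>k. ?p < k \<and> k < q \<longrightarrow> at X q < at X k" using P notprec_lt by blast
    have "?p = c \<or> IM X (min c ?p) (max c ?p) c"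
    proof (cases "c < q")
      case True
      then have IMc: "IM X c q c" using assms by (simp add: min_def max_def)
      have pcq: "prec X c q" using IMc assms unfolding IM_def by auto
      have "c \<le> ?p"
      proof (rule ccontr)
        assume "\<not> c \<le> ?p"
        then have "at X q < at X c" using gt True by auto
        then show False using pcq unfolding prec_def by auto
      qed
      then show ?thesis using IM_sub[OF IMc, of c ?p] P by (cases "c = ?p") (auto simp: min_def max_def)
    next
      case False
      then have cq: "q < c" using assms by auto
      then have IMc: "IM X q c c" using assms by (simp add: min_def max_def)
      have pcq: "prec X c q" using IMc assms unfolding IM_def by auto
      then have acq: "at X c < at X q" using cq unfolding prec_def by auto
      have pcp: "prec X c ?p"
      proof (rule ccontr)
        assume "\<not> prec X c ?p"
        then have ppc: "prec X ?p c" using prec_total P cq by (metis order_less_irrefl order_less_trans)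
        obtain j where j: "q < j" "j \<le> c" "at X j < at X q"
          "\<forall>k. q < k \<and> k < j \<longrightarrow> at X q \<le> at X k"
          using first_below cq acq by blast
        have "j = c \<or> prec X c j" using IMc j unfolding IM_def by auto
        then have ppj: "prec X ?p j" using ppc prec_trans by blast
        have PPj: "PP X j = ?p"
          apply (rule PP_I)
          using P j apply auto[2]
          using ppj apply simp
          using seg_facts(1)[of ?p q j X] gt j P by auto
        have "PC X j = q"
          apply (rule PC_I[OF PPj])
          using seg_facts(2)[of ?p q j X] P j gt by auto
        then show False using \<open>\<not> (\<exists>j. q < j \<and> j \<le> length X \<and> PC X j = q)\<close> j assms by auto
      qed
      have "IM X ?p c c" unfolding IM_def
      proof (intro conjI allI impI)
        fix k assume k: "?p \<le> k \<and> k \<le> c \<and> k \<noteq> c"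
        show "prec X c k"
        proof (cases "q \<le> k")
          case True then show ?thesis using IMc k unfolding IM_def by auto
        next
          case False
          show ?thesis
          proof (cases "k = ?p")
            case True then show ?thesis using pcp by simp
          next
            case False
            then have "at X q < at X k" using gt k \<open>\<not> q \<le> k\<close> by auto
            then show ?thesis using acq unfolding prec_def by auto
          qed
        qed
      qed (use P cq in auto)
      then show ?thesis using P cq by (simp add: min_def max_def)
    qed
    then show ?thesis using g P assms by auto
  qed
qed



lemma chain:
  assumes GPc: "\<forall>i. 1 \<le> i \<and> i \<le> length X \<longrightarrow> preceq S (GP X i) i"
    and c: "1 \<le> c" "c \<le> length X"
  shows "1 \<le> q \<Longrightarrow> q \<le> length X \<Longrightarrow> q \<noteq> c \<Longrightarrow> IM X (min c q) (max c q) c \<Longrightarrow> prec S c q"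
proof (induction "card {k \<in> {1..length X}. prec X k q}" arbitrary: q rule: less_induct)
  case less
  note st = GP_step[OF less.prems(1,2) c less.prems(3,4)]
  let ?g = "GP X q"
  have psq: "prec S ?g q" using GPc less.prems st unfolding preceq_def by auto
  show ?case
  proof (cases "?g = c")
    case True then show ?thesis using psq by simp
  next
    case False
    have sub: "{k \<in> {1..length X}. prec X k ?g} \<subset> {k \<in> {1..length X}. prec X k q}"
    proof
      show "{k \<in> {1..length X}. prec X k ?g} \<subseteq> {k \<in> {1..length X}. prec X k q}"
        using st prec_trans by blast
      have "?g \<in> {k \<in> {1..length X}. prec X k q}" using st by auto
      moreover have "?g \<notin> {k \<in> {1..length X}. prec X k ?g}" using prec_irrefl by blast
      ultimately show "{k \<in> {1..length X}. prec X k ?g} \<noteq> {k \<in> {1..length X}. prec X k q}" by blast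
    qed
    have "card {k \<in> {1..length X}. prec X k ?g} < card {k \<in> {1..length X}. prec X k q}"
      by (rule psubset_card_mono[OF _ sub]) simp
    then have "prec S c ?g" using less.hyps[of ?g] st False by auto
    then show ?thesis using psq prec_trans by blast
  qed
qed

definition pres :: "'a::linorder list \<Rightarrow> 'a list \<Rightarrow> bool" where
  "pres P S \<longleftrightarrow> (\<forall>a b c. 1 \<le> a \<and> b \<le> length P \<and> IM P a b c \<longrightarrow> IM S a b c)"

lemma GPc_pres:
  assumes "\<forall>i. 1 \<le> i \<and> i \<le> length P \<longrightarrow> preceq S (GP P i) i"
  shows "pres P S"
  unfolding pres_def
proof (intro allI impI)
  fix a b c assume h: "1 \<le> a \<and> b \<le> length P \<and> IM P a b c"
  show "IM S a b c" unfolding IM_def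
  proof (intro conjI allI impI)
    fix k assume k: "a \<le> k \<and> k \<le> b \<and> k \<noteq> c"
    have cab: "a \<le> c \<and> c \<le> b" using h unfolding IM_def by auto
    have "IM P (min c k) (max c k) c" using h k cab IM_sub[of P a b c] by (auto simp: min_def max_def)
    then show "prec S c k" using chain[OF assms, of c k] h k unfolding IM_def by auto
  qed (use h in \<open>auto simp: IM_def\<close>)
qed

lemma pres_GPc:
  assumes "pres P S"
  shows "\<forall>i. 1 \<le> i \<and> i \<le> length P \<longrightarrow> preceq S (GP P i) i"
proof (intro allI impI)
  fix i assume i: "1 \<le> i \<and> i \<le> length P"
  show "preceq S (GP P i) i"
  proof (cases "GP P i = i")
    case True then show ?thesis unfolding preceq_def by simp
  next
    case False
    note G = GP_IM[OF conjunct1[OF i] conjunct2[OF i] False]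
    then have "IM S (min i (GP P i)) (max i (GP P i)) (GP P i)"
      using assms i unfolding pres_def by (auto simp: min_def max_def)
    then show ?thesis using False unfolding IM_def preceq_def by auto
  qed
qed



fun nodes :: "btree \<Rightarrow> nat" where
  "nodes Leaf = 0" | "nodes (Node l r) = nodes l + nodes r + 1"

lemma nodes_CT: "nodes (CT X) = length X"
proof (induction "length X" arbitrary: X rule: less_induct)
  case less
  show ?case
  proof (cases "X = []")
    case True then show ?thesis by (simp add: CT.simps)
  next
    case False
    have m: "minidx X < length X" using minidx_less[OF False] .
    then show ?thesis using less False by (subst CT.simps) auto
  qed
qed

lemma minidx_props:
  assumes "X \<noteq> []"
  shows "(\<forall>j < length X. X ! minidx X \<le> X ! j) \<and> (\<forall>j < minidx X. X ! minidx X < X ! j)"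
proof -
  let ?Q = "\<lambda>k. k < length X \<and> (\<forall>j < length X. X ! k \<le> X ! j)"
  have "?Q (minidx X)"
  proof -
    have "Min (set X) \<in> set X" using assms by simp
    then obtain k where k: "k < length X" "X ! k = Min (set X)" by (metis in_set_conv_nth)
    have "?Q k" using k by simp
    then show ?thesis unfolding minidx_def by (rule LeastI)
  qed
  moreover have "\<forall>j < minidx X. \<not> ?Q j" unfolding minidx_def using not_less_Least by blast
  ultimately show ?thesis
  proof (intro conjI allI impI)
    fix j assume j: "j < minidx X"
    assume Q: "?Q (minidx X)" and N: "\<forall>j < minidx X. \<not> ?Q j"
    then have "\<not> ?Q j" using j by blast
    moreover have "j < length X" using j Q by auto
    ultimately obtain i where "i < length X" "X ! i < X ! j" by (auto simp: not_le)
    then show "X ! minidx X < X ! j" using Q by (meson order.strict_trans1)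
  qed auto
qed

lemma root_IM:
  assumes "X \<noteq> []"
  shows "IM X 1 (length X) (minidx X + 1)"
proof -
  note M = minidx_props[OF assms]
  have ml: "minidx X < length X" using minidx_less[OF assms] .
  show ?thesis unfolding IM_def
  proof (intro conjI allI impI)
    fix k assume k: "1 \<le> k \<and> k \<le> length X \<and> k \<noteq> minidx X + 1"
    show "prec X (minidx X + 1) k"
    proof (cases "k < minidx X + 1")
      case True
      then have "X ! minidx X < X ! (k - 1)" using M k by auto
      then show ?thesis unfolding prec_def at_def by simp
    next
      case False
      then have "X ! minidx X \<le> X ! (k - 1)" using M k by auto
      then show ?thesis using False k unfolding prec_def at_def by auto
    qed
  qed (use ml in auto)
qed

lemma at_take: "1 \<le> x \<Longrightarrow> x \<le> k \<Longrightarrow> at (take k X) x = at X x"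
  unfolding at_def by simp

lemma at_drop: "1 \<le> x \<Longrightarrow> r \<le> length X \<Longrightarrow> at (drop r X) x = at X (x + r)"
  unfolding at_def by (simp add: nth_drop add.commute)

lemma IM_take:
  assumes "1 \<le> a" "b \<le> k"
  shows "IM (take k X) a b c = IM X a b c"
proof -
  have "prec (take k X) x y = prec X x y" if "a \<le> x" "x \<le> b" "a \<le> y" "y \<le> b" for x y
    using that assms at_take[of x k X] at_take[of y k X] unfolding prec_def by auto
  then show ?thesis unfolding IM_def by (metis le_trans)
qed

lemma IM_drop:
  assumes "1 \<le> a" "r \<le> length X"
  shows "IM (drop r X) a b c = IM X (a + r) (b + r) (c + r)"
proof -
  have pr: "prec (drop r X) x y = prec X (x + r) (y + r)" if "1 \<le> x" "1 \<le> y" for x y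
    using that assms at_drop[of x r X] at_drop[of y r X] unfolding prec_def by auto
  show ?thesis
  proof
    assume h: "IM (drop r X) a b c"
    show "IM X (a + r) (b + r) (c + r)" unfolding IM_def
    proof (intro conjI allI impI)
      fix k assume k: "a + r \<le> k \<and> k \<le> b + r \<and> k \<noteq> c + r"
      then have "a \<le> k - r \<and> k - r \<le> b \<and> k - r \<noteq> c" by auto
      then have "prec (drop r X) c (k - r)" using h unfolding IM_def by auto
      moreover have "1 \<le> c" using h assms unfolding IM_def by auto
      ultimately show "prec X (c + r) k" using pr[of c "k - r"] k assms by auto
    qed (use h in \<open>auto simp: IM_def\<close>)
  next
    assume h: "IM X (a + r) (b + r) (c + r)"
    show "IM (drop r X) a b c" unfolding IM_def
    proof (intro conjI allI impI)
      fix k assume k: "a \<le> k \<and> k \<le> b \<and> k \<noteq> c"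
      then have "prec X (c + r) (k + r)" using h unfolding IM_def by auto
      moreover have "1 \<le> c" using h assms unfolding IM_def by auto
      ultimately show "prec (drop r X) c k" using pr[of c k] k assms by auto
    qed (use h in \<open>auto simp: IM_def\<close>)
  qed
qed

lemma CT_pres:
  "length P = length S \<Longrightarrow> (CT P = CT S) = pres P S"
proof (induction "length P" arbitrary: P S rule: less_induct)
  case less
  show ?case
  proof (cases "P = []")
    case True
    then have "S = []" using less by simp
    then show ?thesis using True unfolding pres_def IM_def by (simp add: CT.simps)
  next
    case False
    then have SN: "S \<noteq> []" using less by auto
    let ?m = "length P"
    let ?k = "minidx P"
    let ?r = "minidx P + 1"
    have kl: "?k < ?m" using minidx_less[OF False] .
    have CTP: "CT P = Node (CT (take ?k P)) (CT (drop (Suc ?k) P))" using False by (subst CT.simps) simp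
    have CTS: "CT S = Node (CT (take (minidx S) S)) (CT (drop (Suc (minidx S)) S))" using SN by (subst CT.simps) simp
    have rP: "IM P 1 ?m ?r" using root_IM[OF False] .
    have rS: "IM S 1 ?m (minidx S + 1)" using root_IM[OF SN] less by simp
    have IH1: "(CT (take ?k P) = CT (take ?k S)) = pres (take ?k P) (take ?k S)"
      by (rule less.hyps) (use kl less in auto)
    have IH2: "(CT (drop ?r P) = CT (drop ?r S)) = pres (drop ?r P) (drop ?r S)"
      by (rule less.hyps) (use kl less in auto)
    show ?thesis
    proof
      assume eq: "CT P = CT S"
      have "nodes (CT (take ?k P)) = nodes (CT (take (minidx S) S))" using eq CTP CTS by simp
      then have kk: "minidx S = ?k" using kl minidx_less[OF SN] less by (simp add: nodes_CT)
      have e1: "CT (take ?k P) = CT (take ?k S)" and e2: "CT (drop ?r P) = CT (drop ?r S)"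
        using eq CTP CTS kk by auto
      have p1: "pres (take ?k P) (take ?k S)" using IH1 e1 by simp
      have p2: "pres (drop ?r P) (drop ?r S)" using IH2 e2 by simp
      show "pres P S" unfolding pres_def
      proof (intro allI impI)
        fix a b c assume h: "1 \<le> a \<and> b \<le> ?m \<and> IM P a b c"
        consider "a \<le> ?r \<and> ?r \<le> b" | "b < ?r" | "?r < a" by linarith
        then show "IM S a b c"
        proof cases
          case 1
          have "IM P a b ?r" using IM_sub[OF rP, of a b] 1 h by auto
          then have "c = ?r" using IM_unique h by blast
          then show ?thesis using IM_sub[OF rS, of a b] 1 h kk by auto
        next
          case 2
          have "IM (take ?k P) a b c" using IM_take[of a b ?k P c] h 2 by auto
          then have "IM (take ?k S) a b c" using p1 h 2 kl unfolding pres_def by auto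
          then show ?thesis using IM_take[of a b ?k S c] h 2 by auto
        next
          case 3
          have cr: "?r \<le> c" using h 3 unfolding IM_def by auto
          have "IM (drop ?r P) (a - ?r) (b - ?r) (c - ?r)"
            using IM_drop[of "a - ?r" ?r P "b - ?r" "c - ?r"] h 3 cr kl unfolding IM_def by auto
          moreover have "1 \<le> a - ?r" "b - ?r \<le> length (drop ?r P)" using h 3 by auto
          ultimately have "IM (drop ?r S) (a - ?r) (b - ?r) (c - ?r)" using p2[unfolded pres_def, rule_format] by blast
          then show ?thesis
            using IM_drop[of "a - ?r" ?r S "b - ?r" "c - ?r"] h 3 cr kl less unfolding IM_def by auto
        qed
      qed
    next
      assume pr: "pres P S"
      have "IM S 1 ?m ?r" using pr rP unfolding pres_def by auto
      then have kk: "minidx S = ?k" using IM_unique rS by fastforce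
      have p1: "pres (take ?k P) (take ?k S)" unfolding pres_def
      proof (intro allI impI)
        fix a b c assume h: "1 \<le> a \<and> b \<le> length (take ?k P) \<and> IM (take ?k P) a b c"
        then have bk: "b \<le> ?k" by simp
        have "IM P a b c" using IM_take[of a b ?k P c] h bk by auto
        then have "IM S a b c" using pr h bk kl unfolding pres_def by auto
        then show "IM (take ?k S) a b c" using IM_take[of a b ?k S c] h bk by auto
      qed
      have p2: "pres (drop ?r P) (drop ?r S)" unfolding pres_def
      proof (intro allI impI)
        fix a b c assume h: "1 \<le> a \<and> b \<le> length (drop ?r P) \<and> IM (drop ?r P) a b c"
        have "IM P (a + ?r) (b + ?r) (c + ?r)" using IM_drop[of a ?r P b c] h kl by auto
        then have "IM S (a + ?r) (b + ?r) (c + ?r)" using pr h kl unfolding pres_def by auto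
        then show "IM (drop ?r S) a b c" using IM_drop[of a ?r S b c] h kl less by auto
      qed
      show "CT P = CT S" using CTP CTS kk IH1 IH2 p1 p2 by simp
    qed
  qed
qed

theorem theorem3:
  fixes P S :: "'a::linorder list" and m :: nat
  assumes "length P = m" and "length S = m"
  shows "CT P = CT S \<longleftrightarrow> (\<forall>i. 1 \<le> i \<and> i \<le> m \<longrightarrow> preceq S (GP P i) i)"
  using CT_pres[of P S] assms GPc_pres[of P S] pres_GPc[of P S] by auto


end
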